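(* Let $G$ be a connected Lie group with Lie algebra $\mathfrak{su}(2)\oplus\mathbb{R}$ having basis $E_1,E_2,E_3,E_4$ with $[E_1,E_2]=E_3$, $[E_2,E_3]=E_1$, $[E_3,E_1]=E_2$, $[E_i,E_4]=0$ ($i=1,2,3$). Let $i\in\{1,2\}$, with $e_1=E_1$, $e_3=E_2$, $e_4=E_3$, and $e_2=E_4-E_3$ if $i=1$, $e_2=E_4$ if $i=2$. For $\alpha_1^2+\alpha_2^2+\alpha_3^2=1$, $\beta\in\mathbb{R}$ let $$\gamma_i(\alpha_1,\alpha_2,\alpha_3,\beta;t)=\exp\bigl(t(\alpha_1e_1+\alpha_2e_2+\alpha_3e_3+\beta e_4)\bigr)\exp(-t\beta e_4),\quad t\in\mathbb{R}.$$ Then for every $t_0,t\in\mathbb{R}$, $$\gamma_i(t_0)^{-1}\gamma_i(t)=\gamma_i(\alpha_1\cos\beta t_0-\alpha_3\sin\beta t_0,\ \alpha_2,\ \alpha_1\sin\beta t_0+\alpha_3\cos\beta t_0,\ \beta;\ t-t_0),$$ where $\gamma_i(s)$ abbreviates $\gamma_i(\alpha_1,\alpha_2,\alpha_3,\beta;s)$. *)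

theory Defs
  imports "HOL-Analysis.Analysis" "HOL-Algebra.Group"
begin

type_synonym cmat2 = "complex ^ 2 ^ 2"

(* Lie algebra su(2) (+) R, realised inside gl(2,C) x R *)
type_synonym lie_elt = "cmat2 \<times> real"

fun mpow :: "cmat2 \<Rightarrow> nat \<Rightarrow> cmat2" where
  "mpow A 0 = mat 1"
| "mpow A (Suc n) = A ** mpow A n"

definition mexp :: "cmat2 \<Rightarrow> cmat2" where
  "mexp A = (\<Sum>n. (1 / fact n) *\<^sub>R mpow A n)"

definition conj_transpose :: "cmat2 \<Rightarrow> cmat2" where
  "conj_transpose A = (\<chi> i j. cnj (A $ j $ i))"

(* the simply connected Lie group SU(2) x R with componentwise product *)
definition SU2R :: "(cmat2 \<times> real) monoid" where
  "SU2R = \<lparr> carrier = {(A, r). conj_transpose A ** A = mat 1 \<and> det A = 1},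
            mult = (\<lambda>(A, r) (B, s). (A ** B, r + s)),
            one = (mat 1, 0) \<rparr>"

definition lexp :: "lie_elt \<Rightarrow> cmat2 \<times> real" where
  "lexp X = (mexp (fst X), snd X)"

(* basis E_k = -(i/2) sigma_k of su(2) (sigma_k Pauli matrices), and E_4 spanning R;
   [E1,E2]=E3, [E2,E3]=E1, [E3,E1]=E2, E4 central *)
definition E1 :: lie_elt where
  "E1 = (vector [vector [0, -\<i>/2], vector [-\<i>/2, 0]], 0)"
definition E2 :: lie_elt where
  "E2 = (vector [vector [0, -1/2], vector [1/2, 0]], 0)"
definition E3 :: lie_elt where
  "E3 = (vector [vector [-\<i>/2, 0], vector [0, \<i>/2]], 0)"
definition E4 :: lie_elt where
  "E4 = (0, 1)"

definition frame_e :: "nat \<Rightarrow> nat \<Rightarrow> lie_elt" where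
  "frame_e i k = (if k = 1 then E1
                  else if k = 2 then (if i = 1 then E4 - E3 else E4)
                  else if k = 3 then E2
                  else E3)"

(* gamma_i(a1,a2,a3,b;t) in a group G that is the image of SU(2) x R under pi *)
definition gamma :: "('g, 'm) monoid_scheme \<Rightarrow> (cmat2 \<times> real \<Rightarrow> 'g) \<Rightarrow> nat
    \<Rightarrow> real \<Rightarrow> real \<Rightarrow> real \<Rightarrow> real \<Rightarrow> real \<Rightarrow> 'g" where
  "gamma G \<pi> i a1 a2 a3 b t =
     \<pi> (lexp (t *\<^sub>R (a1 *\<^sub>R frame_e i 1 + a2 *\<^sub>R frame_e i 2 + a3 *\<^sub>R frame_e i 3
                     + b *\<^sub>R frame_e i 4)))
     \<otimes>\<^bsub>G\<^esub> \<pi> (lexp ((- t * b) *\<^sub>R frame_e i 4))"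

end

theory Submission
  imports Defs
begin

definition A1 :: cmat2 where "A1 = fst E1"
definition A2 :: cmat2 where "A2 = fst E2"
definition Fm :: cmat2 where "Fm = fst E3"

definition Nf :: "real \<Rightarrow> real \<Rightarrow> real \<Rightarrow> cmat2" where
  "Nf x y z = x *\<^sub>R A1 + y *\<^sub>R A2 + z *\<^sub>R Fm"

lemma cmat2_eq: "(A::cmat2) = B \<longleftrightarrow> A$1$1 = B$1$1 \<and> A$1$2 = B$1$2 \<and> A$2$1 = B$2$1 \<and> A$2$2 = B$2$2"
  by (auto simp: vec_eq_iff forall_2)

lemma mult_entries: "((A::cmat2) ** B)$i$j = A$i$1 * B$1$j + A$i$2 * B$2$j"
  by (simp add: matrix_matrix_mult_def sum_2)

lemma Nf_entries:
  "Nf x y z $1$1 = - \<i> * z / 2" "Nf x y z $1$2 = (- \<i> * x - y) / 2"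
  "Nf x y z $2$1 = (- \<i> * x + y) / 2" "Nf x y z $2$2 = \<i> * z / 2"
  by (simp_all add: vector_scaleR_component Nf_def A1_def A2_def Fm_def E1_def E2_def E3_def scaleR_conv_of_real[where 'a=complex] field_simps)

lemma mat1_entries: "(mat 1 :: cmat2)$1$1 = 1" "(mat 1 :: cmat2)$1$2 = 0" "(mat 1 :: cmat2)$2$1 = 0" "(mat 1 :: cmat2)$2$2 = 1"
  by (simp_all add: mat_def)

lemma Nf_sq: "Nf x y z ** Nf x y z = (- ((x\<^sup>2 + y\<^sup>2 + z\<^sup>2)/4)) *\<^sub>R mat 1"
  by (simp add: cmat2_eq mult_entries Nf_entries mat1_entries vector_scaleR_component scaleR_conv_of_real[where 'a=complex] field_simps power2_eq_square)

lemma mpow_closed: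
  assumes sq: "A ** A = (- q) *\<^sub>R mat 1"
  shows "mpow A n = (if even n then (-q)^(n div 2) *\<^sub>R mat 1 else (-q)^(n div 2) *\<^sub>R A)"
proof (induction n)
  case 0 then show ?case by simp
next
  case (Suc n)
  show ?case
  proof (cases "even n")
    case True
    then show ?thesis using Suc by (simp add: matrix_scalar_ac)
  next
    case False
    then have "Suc n div 2 = Suc (n div 2)" by presburger
    then show ?thesis using Suc False
      by (simp add: matrix_scalar_ac sq scalar_matrix_assoc[symmetric] algebra_simps
        matrix_mul_assoc)
  qed
qed

definition sinc :: "real \<Rightarrow> real" where
  "sinc r = (if r = 0 then 1 else sin r / r)"

lemma mexp_closed:
  assumes sq: "A ** A = (- q) *\<^sub>R mat 1" and q: "q \<ge> 0"
  shows "mexp A = cos (sqrt q) *\<^sub>R mat 1 + sinc (sqrt q) *\<^sub>R A"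
proof -
  define \<rho> where "\<rho> = sqrt q"
  have q\<rho>: "q = \<rho>^2" using q by (simp add: \<rho>_def)
  define xs where "xs n = (if even n then (-q)^(n div 2) / fact n else 0)" for n
  define ys where "ys n = (if even n then 0 else (-q)^(n div 2) / fact n)" for n
  have trm: "(1 / fact n) *\<^sub>R mpow A n = xs n *\<^sub>R mat 1 + ys n *\<^sub>R A" for n
    by (simp add: mpow_closed[OF sq] xs_def ys_def)
  have xs_eq: "xs n = cos_coeff n * \<rho>^n" for n
  proof (cases "even n")
    case True
    then obtain k where "n = 2*k" by blast
    then show ?thesis by (simp add: xs_def cos_coeff_def q\<rho> power_mult power_mult_distrib power_minus[of "\<rho>^2"])
  qed (simp add: xs_def cos_coeff_def)
  have xs_sums: "xs sums cos \<rho>"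
  proof -
    have "xs = (\<lambda>n. cos_coeff n * \<rho>^n)" by (rule ext, rule xs_eq)
    then show ?thesis using cos_converges[of \<rho>] by simp
  qed
  have ys_sums: "ys sums sinc \<rho>"
  proof (cases "\<rho> = 0")
    case True
    then have "ys = (\<lambda>n. if n = 1 then 1 else 0)"
      by (auto simp: fun_eq_iff ys_def q\<rho> elim!: oddE)
    then show ?thesis using sums_single[of 1 "\<lambda>_. 1::real"] True by (simp add: sinc_def)
  next
    case False
    have "ys n = sin_coeff n * \<rho>^n / \<rho>" for n
    proof (cases "even n")
      case False
      then obtain k where "n = 2*k+1" by (blast elim: oddE)
      then show ?thesis using \<open>\<rho> \<noteq> 0\<close>
        by (simp add: ys_def sin_coeff_def q\<rho> power_mult power_mult_distrib power_minus[of "\<rho>^2"])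
    qed (simp add: ys_def sin_coeff_def)
    then have "ys = (\<lambda>n. sin_coeff n * \<rho>^n / \<rho>)" by (rule ext)
    then show ?thesis using sums_divide[OF sin_converges[of \<rho>], of \<rho>] False
      by (simp add: sinc_def)
  qed
  have "(\<lambda>n. (1 / fact n) *\<^sub>R mpow A n) sums (cos \<rho> *\<^sub>R mat 1 + sinc \<rho> *\<^sub>R A)"
    unfolding trm by (intro sums_add sums_scaleR_left xs_sums ys_sums)
  then show ?thesis unfolding mexp_def \<rho>_def by (rule sums_unique[symmetric])
qed

lemma Fm_Nf: "Fm = Nf 0 0 1" by (simp add: Nf_def)

lemma conj_lemma:
  fixes x y z h :: real
  shows "(cos h *\<^sub>R mat 1 + (2 * sin h) *\<^sub>R Fm) **
           Nf (x * cos (2*h) + y * sin (2*h)) (- x * sin (2*h) + y * cos (2*h)) z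
       = Nf x y z ** (cos h *\<^sub>R mat 1 + (2 * sin h) *\<^sub>R Fm)"
  unfolding Fm_Nf sin_double cos_double
  apply (simp add: cmat2_eq mult_entries Nf_entries mat1_entries vector_scaleR_component
      scaleR_conv_of_real[where 'a=complex] complex_eq_iff field_simps power2_eq_square)
  using sin_cos_squared_add[of h] by algebra

lemma SU2_mem:
  fixes C S x y z :: real
  assumes "C\<^sup>2 + S\<^sup>2 * ((x\<^sup>2 + y\<^sup>2 + z\<^sup>2)/4) = 1"
  shows "conj_transpose (C *\<^sub>R mat 1 + S *\<^sub>R Nf x y z) ** (C *\<^sub>R mat 1 + S *\<^sub>R Nf x y z) = mat 1
       \<and> det (C *\<^sub>R mat 1 + S *\<^sub>R Nf x y z) = 1"
  using assms
  by (simp add: cmat2_eq mult_entries Nf_entries mat1_entries vector_scaleR_component conj_transpose_def det_2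
      scaleR_conv_of_real[where 'a=complex] complex_eq_iff field_simps power2_eq_square)

lemma matrix_add_rdistrib':
  fixes A B C :: cmat2
  shows "((B + C) ** A) = (B ** A) + (C ** A)"
  by (simp add: cmat2_eq mult_entries algebra_simps)

definition Sf :: "real \<Rightarrow> real \<Rightarrow> real" where
  "Sf \<rho> t = (if \<rho> = 0 then t else sin (t * \<rho>) / \<rho>)"

lemma mexp_line:
  assumes sq: "N ** N = (- q) *\<^sub>R mat 1" and q: "q \<ge> 0"
  shows "mexp (t *\<^sub>R N) = cos (t * sqrt q) *\<^sub>R mat 1 + Sf (sqrt q) t *\<^sub>R N"
proof -
  have sq': "(t *\<^sub>R N) ** (t *\<^sub>R N) = (- (t\<^sup>2 * q)) *\<^sub>R mat 1"
    by (simp add: matrix_scalar_ac scalar_matrix_assoc[symmetric] sq power2_eq_square)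
  have e: "sqrt (t\<^sup>2 * q) = \<bar>t\<bar> * sqrt q" by (simp add: real_sqrt_mult)
  have c: "cos (\<bar>t\<bar> * sqrt q) = cos (t * sqrt q)"
    by (cases "t \<ge> 0") (auto simp: abs_if)
  have s: "sinc (\<bar>t\<bar> * sqrt q) * t = Sf (sqrt q) t"
    using q by (cases "t \<ge> 0") (auto simp: abs_if sinc_def Sf_def)
  show ?thesis
    using mexp_closed[OF sq'] q by (simp add: e c s[symmetric])
qed

lemma one_param:
  assumes sq: "N ** N = (- q) *\<^sub>R mat 1" and q: "q \<ge> 0"
  shows "mexp (t0 *\<^sub>R N) ** mexp (s *\<^sub>R N) = mexp ((t0 + s) *\<^sub>R N)"
proof -
  define \<rho> where "\<rho> = sqrt q"
  have q\<rho>: "q = \<rho>\<^sup>2" using q by (simp add: \<rho>_def)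
  have prod: "(C0 *\<^sub>R mat 1 + S0 *\<^sub>R N) ** (C1 *\<^sub>R mat 1 + S1 *\<^sub>R N)
      = (C0 * C1 - S0 * S1 * q) *\<^sub>R mat 1 + (C0 * S1 + S0 * C1) *\<^sub>R N" for C0 S0 C1 S1
    by (simp add: matrix_add_ldistrib matrix_add_rdistrib' matrix_scalar_ac
        scalar_matrix_assoc[symmetric] sq algebra_simps)
  have c: "cos (t0 * \<rho>) * cos (s * \<rho>) - Sf \<rho> t0 * Sf \<rho> s * q = cos ((t0 + s) * \<rho>)"
    by (cases "\<rho> = 0") (auto simp: Sf_def q\<rho> cos_add distrib_right power2_eq_square field_simps)
  have si: "cos (t0 * \<rho>) * Sf \<rho> s + Sf \<rho> t0 * cos (s * \<rho>) = Sf \<rho> (t0 + s)"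
    by (cases "\<rho> = 0") (auto simp: Sf_def sin_add distrib_right field_simps)
  show ?thesis
    unfolding mexp_line[OF sq q] prod \<rho>_def[symmetric] c si ..
qed

lemma Fm_sq: "Fm ** Fm = (- (1/4)) *\<^sub>R mat 1"
  using Nf_sq[of 0 0 1] by (simp add: Fm_Nf)

lemma Nf_sq': "Nf x y z ** Nf x y z = (- ((x\<^sup>2 + y\<^sup>2 + z\<^sup>2)/4)) *\<^sub>R mat 1"
  by (rule Nf_sq)

lemma mexp_Fm: "mexp (\<phi> *\<^sub>R Fm) = cos (\<phi>/2) *\<^sub>R mat 1 + (2 * sin (\<phi>/2)) *\<^sub>R Fm"
proof -
  have h: "sqrt (1/4::real) = 1/2" by (simp add: real_sqrt_divide)
  show ?thesis using mexp_line[OF Fm_sq, of \<phi>] unfolding h by (simp add: Sf_def)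
qed

lemma conj_mexp:
  "mexp ((- \<theta>) *\<^sub>R Fm) ** mexp (s *\<^sub>R Nf (x * cos \<theta> - y * sin \<theta>) (x * sin \<theta> + y * cos \<theta>) z)
   = mexp (s *\<^sub>R Nf x y z) ** mexp ((- \<theta>) *\<^sub>R Fm)"
proof -
  define h where "h = - \<theta> / 2"
  define q where "q = (x\<^sup>2 + y\<^sup>2 + z\<^sup>2)/4"
  have hh: "- \<theta> / 2 = h" "\<theta> = - (2 * h)" by (simp_all add: h_def)
  have N': "Nf (x * cos \<theta> - y * sin \<theta>) (x * sin \<theta> + y * cos \<theta>) z
      = Nf (x * cos (2*h) + y * sin (2*h)) (- x * sin (2*h) + y * cos (2*h)) z"
    by (simp add: hh(2))
  have qq: "((x * cos \<theta> - y * sin \<theta>)\<^sup>2 + (x * sin \<theta> + y * cos \<theta>)\<^sup>2 + z\<^sup>2) / 4 = q"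
    unfolding q_def using sin_cos_squared_add[of \<theta>] by algebra
  have q0: "q \<ge> 0" by (simp add: q_def)
  define D where "D = cos h *\<^sub>R mat 1 + (2 * sin h) *\<^sub>R Fm"
  have D: "mexp ((- \<theta>) *\<^sub>R Fm) = D" unfolding mexp_Fm D_def hh(1) ..
  define M where "M = Nf x y z"
  define M' where "M' = Nf (x * cos \<theta> - y * sin \<theta>) (x * sin \<theta> + y * cos \<theta>) z"
  have DM: "D ** M' = M ** D" unfolding D_def M_def M'_def N' by (rule conj_lemma)
  have e1: "mexp (s *\<^sub>R M') = cos (s * sqrt q) *\<^sub>R mat 1 + Sf (sqrt q) s *\<^sub>R M'"
    using mexp_line[OF Nf_sq' q0[folded qq]] unfolding M'_def qq .
  have e2: "mexp (s *\<^sub>R M) = cos (s * sqrt q) *\<^sub>R mat 1 + Sf (sqrt q) s *\<^sub>R M"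
    using mexp_line[OF Nf_sq' q0[unfolded q_def]] unfolding M_def q_def .
  show ?thesis
    unfolding D M_def[symmetric] M'_def[symmetric] e1 e2
    by (simp add: matrix_add_ldistrib matrix_add_rdistrib' matrix_scalar_ac
        scalar_matrix_assoc[symmetric] DM)
qed

lemma mexp_SU2:
  "conj_transpose (mexp (t *\<^sub>R Nf x y z)) ** mexp (t *\<^sub>R Nf x y z) = mat 1
   \<and> det (mexp (t *\<^sub>R Nf x y z)) = 1"
proof -
  define q where "q = (x\<^sup>2 + y\<^sup>2 + z\<^sup>2)/4"
  have q0: "q \<ge> 0" by (simp add: q_def)
  have e: "mexp (t *\<^sub>R Nf x y z) = cos (t * sqrt q) *\<^sub>R mat 1 + Sf (sqrt q) t *\<^sub>R Nf x y z"
    using mexp_line[OF Nf_sq' q0[unfolded q_def]] unfolding q_def .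
  have "(cos (t * sqrt q))\<^sup>2 + (Sf (sqrt q) t)\<^sup>2 * q = 1"
  proof (cases "sqrt q = 0")
    case True then show ?thesis using q0 by (simp add: Sf_def)
  next
    case False
    then show ?thesis using q0 sin_cos_squared_add[of "t * sqrt q"]
      by (simp add: Sf_def power_divide)
  qed
  then show ?thesis unfolding e by (intro SU2_mem) (simp add: q_def)
qed

lemma E_pairs: "E1 = (A1, 0)" "E2 = (A2, 0)" "E3 = (Fm, 0)" "E4 = (0, 1)"
  by (simp_all add: A1_def A2_def Fm_def E1_def E2_def E3_def E4_def)

lemma SU2R_mult: "(A, r) \<otimes>\<^bsub>SU2R\<^esub> (B, s) = (A ** B, r + s)"
  by (simp add: SU2R_def)

lemma SU2R_carrier: "(A, r) \<in> carrier SU2R \<longleftrightarrow> conj_transpose A ** A = mat 1 \<and> det A = 1"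
  by (simp add: SU2R_def)

lemma gamma_eq:
  "gamma G \<pi> i x a2 y b t =
     \<pi> (mexp (t *\<^sub>R Nf x y (if i = 1 then b - a2 else b)), t * a2)
     \<otimes>\<^bsub>G\<^esub> \<pi> (mexp ((- t * b) *\<^sub>R Fm), 0)"
proof -
  have "t *\<^sub>R (x *\<^sub>R frame_e i 1 + a2 *\<^sub>R frame_e i 2 + y *\<^sub>R frame_e i 3 + b *\<^sub>R frame_e i 4)
      = (t *\<^sub>R Nf x y (if i = 1 then b - a2 else b), t * a2)"
    by (simp add: frame_e_def E_pairs Nf_def algebra_simps)
  moreover have "(- t * b) *\<^sub>R frame_e i 4 = ((- t * b) *\<^sub>R Fm, 0)"
    by (simp add: frame_e_def E_pairs)
  ultimately show ?thesis by (simp add: gamma_def lexp_def)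
qed

theorem proposition3:
  fixes G :: "('g, 'm) monoid_scheme" and \<pi> :: "cmat2 \<times> real \<Rightarrow> 'g"
    and i :: nat and a1 a2 a3 b t0 t :: real
  assumes "group G" and "\<pi> \<in> hom SU2R G"
    and "i \<in> {1, 2}"
    and "a1\<^sup>2 + a2\<^sup>2 + a3\<^sup>2 = 1"
  shows "inv\<^bsub>G\<^esub> (gamma G \<pi> i a1 a2 a3 b t0) \<otimes>\<^bsub>G\<^esub> gamma G \<pi> i a1 a2 a3 b t =
         gamma G \<pi> i (a1 * cos (b * t0) - a3 * sin (b * t0)) a2
                     (a1 * sin (b * t0) + a3 * cos (b * t0)) b (t - t0)"
proof -
  interpret G: group G by fact
  have hom: "\<pi> \<in> hom SU2R G" by fact
  define c where "c = (if i = 1 then b - a2 else b)"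
  define s where "s = t - t0"
  define \<theta> where "\<theta> = b * t0"
  define P where "P u x y = (mexp (u *\<^sub>R Nf x y c), u * a2)" for u x y
  define D where "D u = (mexp ((- u * b) *\<^sub>R Fm), (0::real))" for u
  have gam: "gamma G \<pi> i x a2 y b u = \<pi> (P u x y) \<otimes>\<^bsub>G\<^esub> \<pi> (D u)" for x y u
    unfolding P_def D_def c_def by (rule gamma_eq)
  have PC: "P u x y \<in> carrier SU2R" for u x y
    unfolding P_def SU2R_carrier by (rule mexp_SU2)
  have DC: "D u \<in> carrier SU2R" for u
    unfolding D_def SU2R_carrier Fm_Nf by (rule mexp_SU2)
  have gP: "\<pi> (P u x y) \<in> carrier G" for u x y using hom PC by (rule hom_in_carrier)
  have gD: "\<pi> (D u) \<in> carrier G" for u using hom DC by (rule hom_in_carrier)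
  have hm: "\<pi> (X \<otimes>\<^bsub>SU2R\<^esub> Y) = \<pi> X \<otimes>\<^bsub>G\<^esub> \<pi> Y" if "X \<in> carrier SU2R" "Y \<in> carrier SU2R" for X Y
    using hom that by (rule hom_mult)
  define x' where "x' = a1 * cos \<theta> - a3 * sin \<theta>"
  define y' where "y' = a1 * sin \<theta> + a3 * cos \<theta>"
  have K1: "D t0 \<otimes>\<^bsub>SU2R\<^esub> P s x' y' = P s a1 a3 \<otimes>\<^bsub>SU2R\<^esub> D t0"
  proof -
    have "- t0 * b = - \<theta>" by (simp add: \<theta>_def)
    then show ?thesis
      unfolding D_def P_def SU2R_mult x'_def y'_def using conj_mexp[of \<theta> s a1 a3 c] by simp
  qed
  have K2: "P t0 a1 a3 \<otimes>\<^bsub>SU2R\<^esub> P s a1 a3 = P t a1 a3"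
  proof -
    have m: "mexp (t0 *\<^sub>R Nf a1 a3 c) ** mexp (s *\<^sub>R Nf a1 a3 c) = mexp (t *\<^sub>R Nf a1 a3 c)"
      using one_param[OF Nf_sq'[of a1 a3 c], of t0 s] by (simp add: s_def)
    show ?thesis unfolding P_def SU2R_mult m by (simp add: s_def algebra_simps)
  qed
  have K3: "D t0 \<otimes>\<^bsub>SU2R\<^esub> D s = D t"
  proof -
    have m: "mexp ((- t0 * b) *\<^sub>R Fm) ** mexp ((- s * b) *\<^sub>R Fm) = mexp ((- t * b) *\<^sub>R Fm)"
      using one_param[OF Fm_sq, of "- t0 * b" "- s * b"] by (simp add: s_def algebra_simps)
    show ?thesis unfolding D_def SU2R_mult m by simp
  qed
  have main: "gamma G \<pi> i a1 a2 a3 b t0 \<otimes>\<^bsub>G\<^esub> gamma G \<pi> i x' a2 y' b s = gamma G \<pi> i a1 a2 a3 b t"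
  proof -
    have "gamma G \<pi> i a1 a2 a3 b t0 \<otimes>\<^bsub>G\<^esub> gamma G \<pi> i x' a2 y' b s
        = \<pi> (P t0 a1 a3) \<otimes>\<^bsub>G\<^esub> ((\<pi> (D t0) \<otimes>\<^bsub>G\<^esub> \<pi> (P s x' y')) \<otimes>\<^bsub>G\<^esub> \<pi> (D s))"
      unfolding gam using gP gD by (simp add: G.m_assoc)
    also have "\<pi> (D t0) \<otimes>\<^bsub>G\<^esub> \<pi> (P s x' y') = \<pi> (P s a1 a3) \<otimes>\<^bsub>G\<^esub> \<pi> (D t0)"
      unfolding hm[OF DC PC, symmetric] hm[OF PC DC, symmetric] K1 ..
    also have "\<pi> (P t0 a1 a3) \<otimes>\<^bsub>G\<^esub> ((\<pi> (P s a1 a3) \<otimes>\<^bsub>G\<^esub> \<pi> (D t0)) \<otimes>\<^bsub>G\<^esub> \<pi> (D s))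
        = (\<pi> (P t0 a1 a3) \<otimes>\<^bsub>G\<^esub> \<pi> (P s a1 a3)) \<otimes>\<^bsub>G\<^esub> (\<pi> (D t0) \<otimes>\<^bsub>G\<^esub> \<pi> (D s))"
      using gP gD by (simp add: G.m_assoc)
    also have "\<dots> = gamma G \<pi> i a1 a2 a3 b t"
      unfolding gam hm[OF PC PC, symmetric] hm[OF DC DC, symmetric] K2 K3 ..
    finally show ?thesis .
  qed
  have g0: "gamma G \<pi> i a1 a2 a3 b t0 \<in> carrier G" unfolding gam using gP gD by simp
  have g1: "gamma G \<pi> i x' a2 y' b s \<in> carrier G" unfolding gam using gP gD by simp
  have "inv\<^bsub>G\<^esub> (gamma G \<pi> i a1 a2 a3 b t0) \<otimes>\<^bsub>G\<^esub> gamma G \<pi> i a1 a2 a3 b t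
      = gamma G \<pi> i x' a2 y' b s"
    unfolding main[symmetric] using g0 g1 by (simp add: G.m_assoc[symmetric])
  then show ?thesis by (simp add: x'_def y'_def s_def \<theta>_def)
qed

end
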